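(* Let $I$ be an open interval and let $a_1,a_2,a_3\in I$ satisfy $\sin\big(\frac{a_1-a_3}{2}\big)\sin\big(\frac{a_2-a_1}{2}\big)\sin\big(\frac{a_3-a_2}{2}\big)\neq0$. Then for all $f\in\mathscr{C}^3(I)$ and $x\in I$, \[ \begin{aligned} f(x)&=\bigg(f(a_1)+\int_{a_1}^x(f'''+f')(t)\big(1-\cos(a_1-t)\big)dt\bigg)\frac{\cos\big(x-\frac{a_2+a_3}{2}\big)-\cos\big(\frac{a_2-a_3}{2}\big)}{\cos\big(a_1-\frac{a_2+a_3}{2}\big)-\cos\big(\frac{a_2-a_3}{2}\big)}\\ &\quad+\bigg(f(a_2)+\int_{a_2}^x(f'''+f')(t)\big(1-\cos(a_2-t)\big)dt\bigg)\frac{\cos\big(x-\frac{a_1+a_3}{2}\big)-\cos\big(\frac{a_1-a_3}{2}\big)}{\cos\big(a_2-\frac{a_1+a_3}{2}\big)-\cos\big(\frac{a_1-a_3}{2}\big)}\\ &\quad+\bigg(f(a_3)+\int_{a_3}^x(f'''+f')(t)\big(1-\cos(a_3-t)\big)dt\bigg)\frac{\cos\big(x-\frac{a_1+a_2}{2}\big)-\cos\big(\frac{a_1-a_2}{2}\big)}{\cos\big(a_3-\frac{a_1+a_2}{2}\big)-\cos\big(\frac{a_1-a_2}{2}\big)}. \end{aligned} \]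
   Context: $\mathscr{C}^3(I)$ denotes the space of three times continuously differentiable complex-valued functions on $I$. *)

theory Defs
  imports "HOL-Analysis.Analysis"
begin

definition oint :: "real \<Rightarrow> real \<Rightarrow> (real \<Rightarrow> complex) \<Rightarrow> complex" where
  "oint a b g = (if a \<le> b then integral {a..b} g else - integral {b..a} g)"

definition C3_with :: "real set \<Rightarrow> (real \<Rightarrow> complex) \<Rightarrow> (real \<Rightarrow> complex) \<Rightarrow> (real \<Rightarrow> complex) \<Rightarrow> (real \<Rightarrow> complex) \<Rightarrow> bool" where
  "C3_with I f f1 f2 f3 \<longleftrightarrow>
     (\<forall>t\<in>I. (f has_vector_derivative f1 t) (at t) \<and> (f1 has_vector_derivative f2 t) (at t)
            \<and> (f2 has_vector_derivative f3 t) (at t)) \<and> continuous_on I f3"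

end

theory Submission
  imports Defs
begin

lemma fac: fixes y b c :: real
  shows "cos (y - (b+c)/2) - cos ((b-c)/2) = -2 * sin ((y-c)/2) * sin ((y-b)/2)"
proof -
  have e1: "(y - (b+c)/2 + (b-c)/2)/2 = (y-c)/2" by (simp add: field_simps)
  have e2: "((b-c)/2 - (y - (b+c)/2))/2 = -((y-b)/2)" by (simp add: field_simps)
  show ?thesis unfolding cos_diff_cos e1 e2 by simp
qed

lemma half: fixes X A B C :: real
  assumes "sin (A-B) \<noteq> 0" "sin (A-C) \<noteq> 0" "sin (B-C) \<noteq> 0"
  shows "sin (X-C) * sin(X-B)/(sin(A-C) * sin(A-B)) + sin (X-C) * sin(X-A)/(sin(B-C) * sin(B-A))
        + sin (X-B) * sin(X-A)/(sin(C-B) * sin(C-A)) = 1"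
   and "2 * sin(A-X)^2 * (sin (X-C) * sin(X-B)/(sin(A-C) * sin(A-B))) + 2 * sin(B-X)^2 * (sin (X-C) * sin(X-A)/(sin(B-C) * sin(B-A)))
        + 2 * sin(C-X)^2 * (sin (X-B) * sin(X-A)/(sin(C-B) * sin(C-A))) = 0"
   and "2 * sin(A-X) * cos(A-X) * (sin (X-C) * sin(X-B)/(sin(A-C) * sin(A-B))) + 2 * sin(B-X) * cos(B-X) * (sin (X-C) * sin(X-A)/(sin(B-C) * sin(B-A)))
        + 2 * sin(C-X) * cos(C-X) * (sin (X-B) * sin(X-A)/(sin(C-B) * sin(C-A))) = 0"
proof -
  have n: "sin (B-A) \<noteq> 0" "sin (C-A) \<noteq> 0" "sin (C-B) \<noteq> 0"
    using assms by (metis minus_diff_eq sin_minus neg_equal_0_iff_equal)+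
  have h: "sin X ^2 + cos X^2 = 1" "sin A ^2 + cos A^2 = 1" "sin B ^2 + cos B^2 = 1" "sin C ^2 + cos C^2 = 1"
    by simp_all
  show "sin (X-C) * sin(X-B)/(sin(A-C) * sin(A-B)) + sin (X-C) * sin(X-A)/(sin(B-C) * sin(B-A))
        + sin (X-B) * sin(X-A)/(sin(C-B) * sin(C-A)) = 1"
    using assms n apply (simp add: field_simps) unfolding sin_diff cos_diff using h by algebra
  have sw: "sin (A-X) = - sin (X-A)" "sin (B-X) = - sin (X-B)" "sin (C-X) = - sin (X-C)"
     "cos (A-X) = cos (X-A)" "cos (B-X) = cos (X-B)" "cos (C-X) = cos (X-C)"
     "sin (B-A) = - sin (A-B)" "sin (C-A) = - sin (A-C)" "sin (C-B) = - sin (B-C)"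
    by (metis minus_diff_eq sin_minus cos_minus)+
  have e2: "sin(X-A) * sin(B-C) - sin(X-B) * sin(A-C) + sin(X-C) * sin(A-B) = 0"
    by (simp add: sin_diff cos_diff algebra_simps)
  have e3: "cos(X-A) * sin(B-C) - cos(X-B) * sin(A-C) + cos(X-C) * sin(A-B) = 0"
    by (simp add: sin_diff cos_diff algebra_simps)
  show "2 * sin(A-X)^2 * (sin (X-C) * sin(X-B)/(sin(A-C) * sin(A-B))) + 2 * sin(B-X)^2 * (sin (X-C) * sin(X-A)/(sin(B-C) * sin(B-A)))
        + 2 * sin(C-X)^2 * (sin (X-B) * sin(X-A)/(sin(C-B) * sin(C-A))) = 0"
    unfolding sw using assms apply (simp add: field_simps) using e2 by algebra
  show "2 * sin(A-X) * cos(A-X) * (sin (X-C) * sin(X-B)/(sin(A-C) * sin(A-B))) + 2 * sin(B-X) * cos(B-X) * (sin (X-C) * sin(X-A)/(sin(B-C) * sin(B-A)))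
        + 2 * sin(C-X) * cos(C-X) * (sin (X-B) * sin(X-A)/(sin(C-B) * sin(C-A))) = 0"
    unfolding sw using assms apply (simp add: field_simps) using e3 by algebra
qed
lemma Gderiv:
  assumes "C3_with I f f1 f2 f3" "t \<in> I"
  shows "((\<lambda>t. f t + f2 t * complex_of_real (1 - cos (a - t)) + f1 t * complex_of_real (sin (a - t)))
     has_vector_derivative ((f3 t + f1 t) * complex_of_real (1 - cos (a - t)))) (at t within S)"
proof -
  from assms have d: "(f has_vector_derivative f1 t) (at t)" "(f1 has_vector_derivative f2 t) (at t)"
     "(f2 has_vector_derivative f3 t) (at t)" unfolding C3_with_def by auto
  have c1: "((\<lambda>t. 1 - cos (a - t)) has_field_derivative (- sin (a - t))) (at t)"
    by (auto intro!: derivative_eq_intros)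
  have c2: "((\<lambda>t. sin (a - t)) has_field_derivative (- cos (a - t))) (at t)"
    by (auto intro!: derivative_eq_intros)
  have "((\<lambda>t. f t + f2 t * complex_of_real (1 - cos (a - t)) + f1 t * complex_of_real (sin (a - t)))
     has_vector_derivative (f1 t + (f2 t * of_real (- sin (a - t)) + f3 t * of_real (1 - cos (a - t)))
        + (f1 t * of_real (- cos (a - t)) + f2 t * of_real (sin (a - t))))) (at t)"
    by (intro has_vector_derivative_add has_vector_derivative_mult has_vector_derivative_of_real d c1 c2)
  moreover have "f1 t + (f2 t * of_real (- sin (a - t)) + f3 t * of_real (1 - cos (a - t)))
        + (f1 t * of_real (- cos (a - t)) + f2 t * of_real (sin (a - t)))
      = (f3 t + f1 t) * complex_of_real (1 - cos (a - t))"
    by (simp add: algebra_simps)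
  ultimately show ?thesis using has_vector_derivative_at_within by metis
qed

lemma Gint:
  assumes "C3_with I f f1 f2 f3" "is_interval I" "a \<in> I" "x \<in> I"
  shows "f a + oint a x (\<lambda>t. (f3 t + f1 t) * complex_of_real (1 - cos (a - t)))
     = f x + f2 x * complex_of_real (1 - cos (a - x)) + f1 x * complex_of_real (sin (a - x))"
proof -
  define G where "G = (\<lambda>t. f t + f2 t * complex_of_real (1 - cos (a - t)) + f1 t * complex_of_real (sin (a - t)))"
  have Ga: "G a = f a" by (simp add: G_def)
  have sub: "{u..v} \<subseteq> I" if "u \<in> I" "v \<in> I" for u v
    using assms(2) that by (meson atLeastAtMost_iff is_interval_1 subsetI)
  show ?thesis
  proof (cases "a \<le> x")
    case True
    have "((\<lambda>t. (f3 t + f1 t) * complex_of_real (1 - cos (a - t))) has_integral (G x - G a)) {a..x}"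
      apply (rule fundamental_theorem_of_calculus[OF True])
      unfolding G_def using Gderiv[OF assms(1)] sub[OF assms(3,4)] by blast
    then show ?thesis using True Ga unfolding oint_def by (simp add: integral_unique G_def)
  next
    case False
    then have F: "x \<le> a" by simp
    have "((\<lambda>t. (f3 t + f1 t) * complex_of_real (1 - cos (a - t))) has_integral (G a - G x)) {x..a}"
      apply (rule fundamental_theorem_of_calculus[OF F])
      unfolding G_def using Gderiv[OF assms(1)] sub[OF assms(4,3)] by blast
    then show ?thesis using False Ga unfolding oint_def by (simp add: integral_unique G_def)
  qed
qed

lemma interp:
  fixes a1 a2 a3 x :: real
  assumes "sin ((a1 - a3) / 2) * sin ((a2 - a1) / 2) * sin ((a3 - a2) / 2) \<noteq> 0"
  shows "((cos (x - (a2 + a3) / 2) - cos ((a2 - a3) / 2)) / (cos (a1 - (a2 + a3) / 2) - cos ((a2 - a3) / 2))) + ((cos (x - (a1 + a3) / 2) - cos ((a1 - a3) / 2)) / (cos (a2 - (a1 + a3) / 2) - cos ((a1 - a3) / 2))) + ((cos (x - (a1 + a2) / 2) - cos ((a1 - a2) / 2)) / (cos (a3 - (a1 + a2) / 2) - cos ((a1 - a2) / 2))) = 1"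
    and "(1 - cos (a1 - x)) * ((cos (x - (a2 + a3) / 2) - cos ((a2 - a3) / 2)) / (cos (a1 - (a2 + a3) / 2) - cos ((a2 - a3) / 2))) + (1 - cos (a2 - x)) * ((cos (x - (a1 + a3) / 2) - cos ((a1 - a3) / 2)) / (cos (a2 - (a1 + a3) / 2) - cos ((a1 - a3) / 2))) + (1 - cos (a3 - x)) * ((cos (x - (a1 + a2) / 2) - cos ((a1 - a2) / 2)) / (cos (a3 - (a1 + a2) / 2) - cos ((a1 - a2) / 2))) = 0"
    and "sin (a1 - x) * ((cos (x - (a2 + a3) / 2) - cos ((a2 - a3) / 2)) / (cos (a1 - (a2 + a3) / 2) - cos ((a2 - a3) / 2))) + sin (a2 - x) * ((cos (x - (a1 + a3) / 2) - cos ((a1 - a3) / 2)) / (cos (a2 - (a1 + a3) / 2) - cos ((a1 - a3) / 2))) + sin (a3 - x) * ((cos (x - (a1 + a2) / 2) - cos ((a1 - a2) / 2)) / (cos (a3 - (a1 + a2) / 2) - cos ((a1 - a2) / 2))) = 0"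
proof -
  define X A B C where XABC: "X = x/2" "A = a1/2" "B = a2/2" "C = a3/2"
  have nz: "sin (A-B) \<noteq> 0" "sin (A-C) \<noteq> 0" "sin (B-C) \<noteq> 0"
  proof -
    have "sin ((a1 - a3) / 2) \<noteq> 0" "sin ((a2 - a1) / 2) \<noteq> 0" "sin ((a3 - a2) / 2) \<noteq> 0"
      using assms by auto
    moreover have q: "A - B = - ((a2 - a1)/2)" "A - C = (a1 - a3)/2" "B - C = - ((a3 - a2)/2)"
      unfolding XABC by (simp_all add: field_simps)
    ultimately show "sin (A-B) \<noteq> 0" "sin (A-C) \<noteq> 0" "sin (B-C) \<noteq> 0"
      by (simp_all only: q sin_minus neg_equal_0_iff_equal) simp_all
  qed
  have e1: "((cos (x - (a2 + a3) / 2) - cos ((a2 - a3) / 2)) / (cos (a1 - (a2 + a3) / 2) - cos ((a2 - a3) / 2))) = sin (X-C) * sin (X-B) / (sin (A-C) * sin (A-B))"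
    unfolding fac XABC by (simp add: diff_divide_distrib)
  have e2: "((cos (x - (a1 + a3) / 2) - cos ((a1 - a3) / 2)) / (cos (a2 - (a1 + a3) / 2) - cos ((a1 - a3) / 2))) = sin (X-C) * sin (X-A) / (sin (B-C) * sin (B-A))"
    unfolding fac XABC by (simp add: diff_divide_distrib)
  have e3: "((cos (x - (a1 + a2) / 2) - cos ((a1 - a2) / 2)) / (cos (a3 - (a1 + a2) / 2) - cos ((a1 - a2) / 2))) = sin (X-B) * sin (X-A) / (sin (C-B) * sin (C-A))"
    unfolding fac XABC by (simp add: diff_divide_distrib)
  have d: "a1 - x = 2 * (A - X)" "a2 - x = 2 * (B - X)" "a3 - x = 2 * (C - X)"
    unfolding XABC by simp_all
  note H = half[OF nz, of X]
  show "((cos (x - (a2 + a3) / 2) - cos ((a2 - a3) / 2)) / (cos (a1 - (a2 + a3) / 2) - cos ((a2 - a3) / 2))) + ((cos (x - (a1 + a3) / 2) - cos ((a1 - a3) / 2)) / (cos (a2 - (a1 + a3) / 2) - cos ((a1 - a3) / 2))) + ((cos (x - (a1 + a2) / 2) - cos ((a1 - a2) / 2)) / (cos (a3 - (a1 + a2) / 2) - cos ((a1 - a2) / 2))) = 1" unfolding e1 e2 e3 by (rule H(1))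
  show "(1 - cos (a1 - x)) * ((cos (x - (a2 + a3) / 2) - cos ((a2 - a3) / 2)) / (cos (a1 - (a2 + a3) / 2) - cos ((a2 - a3) / 2))) + (1 - cos (a2 - x)) * ((cos (x - (a1 + a3) / 2) - cos ((a1 - a3) / 2)) / (cos (a2 - (a1 + a3) / 2) - cos ((a1 - a3) / 2))) + (1 - cos (a3 - x)) * ((cos (x - (a1 + a2) / 2) - cos ((a1 - a2) / 2)) / (cos (a3 - (a1 + a2) / 2) - cos ((a1 - a2) / 2))) = 0"
    unfolding e1 e2 e3 d cos_double_sin using H(2) by simp
  show "sin (a1 - x) * ((cos (x - (a2 + a3) / 2) - cos ((a2 - a3) / 2)) / (cos (a1 - (a2 + a3) / 2) - cos ((a2 - a3) / 2))) + sin (a2 - x) * ((cos (x - (a1 + a3) / 2) - cos ((a1 - a3) / 2)) / (cos (a2 - (a1 + a3) / 2) - cos ((a1 - a3) / 2))) + sin (a3 - x) * ((cos (x - (a1 + a2) / 2) - cos ((a1 - a2) / 2)) / (cos (a3 - (a1 + a2) / 2) - cos ((a1 - a2) / 2))) = 0"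
    unfolding e1 e2 e3 d sin_double using H(3) by simp
qed

lemma regroup:
  fixes u v z :: complex and w1 w2 w3 s1 s2 s3 p1 p2 p3 :: real
  shows "(u + v * complex_of_real w1 + z * complex_of_real s1) * complex_of_real p1
     + (u + v * complex_of_real w2 + z * complex_of_real s2) * complex_of_real p2
     + (u + v * complex_of_real w3 + z * complex_of_real s3) * complex_of_real p3
     = u * complex_of_real (p1 + p2 + p3) + v * complex_of_real (w1 * p1 + w2 * p2 + w3 * p3)
       + z * complex_of_real (s1 * p1 + s2 * p2 + s3 * p3)"
  by (simp add: algebra_simps)

theorem mainTheorem12:
  fixes I :: "real set" and a1 a2 a3 x :: real and f f1 f2 f3 :: "real \<Rightarrow> complex"
  assumes "open I" and "is_interval I"
    and "a1 \<in> I" and "a2 \<in> I" and "a3 \<in> I"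
    and "sin ((a1 - a3) / 2) * sin ((a2 - a1) / 2) * sin ((a3 - a2) / 2) \<noteq> 0"
    and "C3_with I f f1 f2 f3"
    and "x \<in> I"
  shows "f x =
    (f a1 + oint a1 x (\<lambda>t. (f3 t + f1 t) * complex_of_real (1 - cos (a1 - t))))
      * complex_of_real ((cos (x - (a2 + a3) / 2) - cos ((a2 - a3) / 2))
                       / (cos (a1 - (a2 + a3) / 2) - cos ((a2 - a3) / 2)))
  + (f a2 + oint a2 x (\<lambda>t. (f3 t + f1 t) * complex_of_real (1 - cos (a2 - t))))
      * complex_of_real ((cos (x - (a1 + a3) / 2) - cos ((a1 - a3) / 2))
                       / (cos (a2 - (a1 + a3) / 2) - cos ((a1 - a3) / 2)))
  + (f a3 + oint a3 x (\<lambda>t. (f3 t + f1 t) * complex_of_real (1 - cos (a3 - t))))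
      * complex_of_real ((cos (x - (a1 + a2) / 2) - cos ((a1 - a2) / 2))
                       / (cos (a3 - (a1 + a2) / 2) - cos ((a1 - a2) / 2)))"
proof -
  note C = assms(7)
  note I = interp[OF assms(6), of x]
  define P1 P2 P3 where P_defs: "P1 = ((cos (x - (a2 + a3) / 2) - cos ((a2 - a3) / 2)) / (cos (a1 - (a2 + a3) / 2) - cos ((a2 - a3) / 2)))" "P2 = ((cos (x - (a1 + a3) / 2) - cos ((a1 - a3) / 2)) / (cos (a2 - (a1 + a3) / 2) - cos ((a1 - a3) / 2)))" "P3 = ((cos (x - (a1 + a2) / 2) - cos ((a1 - a2) / 2)) / (cos (a3 - (a1 + a2) / 2) - cos ((a1 - a2) / 2)))"
  show ?thesis unfolding Gint[OF C assms(2) assms(3) assms(8)] Gint[OF C assms(2) assms(4) assms(8)]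
      Gint[OF C assms(2) assms(5) assms(8)]
  proof -
    let ?R = "(f x + f2 x * complex_of_real (1 - cos (a1 - x)) + f1 x * complex_of_real (sin (a1 - x))) * complex_of_real ((cos (x - (a2 + a3) / 2) - cos ((a2 - a3) / 2)) / (cos (a1 - (a2 + a3) / 2) - cos ((a2 - a3) / 2)))
      + (f x + f2 x * complex_of_real (1 - cos (a2 - x)) + f1 x * complex_of_real (sin (a2 - x))) * complex_of_real ((cos (x - (a1 + a3) / 2) - cos ((a1 - a3) / 2)) / (cos (a2 - (a1 + a3) / 2) - cos ((a1 - a3) / 2)))
      + (f x + f2 x * complex_of_real (1 - cos (a3 - x)) + f1 x * complex_of_real (sin (a3 - x))) * complex_of_real ((cos (x - (a1 + a2) / 2) - cos ((a1 - a2) / 2)) / (cos (a3 - (a1 + a2) / 2) - cos ((a1 - a2) / 2)))"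
    have "?R = f x * complex_of_real (P1 + P2 + P3)
       + f2 x * complex_of_real ((1 - cos (a1 - x)) * P1 + (1 - cos (a2 - x)) * P2 + (1 - cos (a3 - x)) * P3)
       + f1 x * complex_of_real (sin (a1 - x) * P1 + sin (a2 - x) * P2 + sin (a3 - x) * P3)"
      unfolding P_defs[symmetric] by (rule regroup)
    also have "\<dots> = f x" unfolding P_defs I by simp
    finally show "f x = ?R" by simp
  qed
qed

end
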